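(* Under the setting described in the context, let $j\in J$ and let $U_j^\ell\in\mathbb{F}_h^\ell$ be a lifted discrete eigenfunction associated with $\Lambda_j$ such that $\|U_j^\ell\|_m=1$. Then $$|\lambda_j-\Lambda_j|\le\|\mathcal{P}_mU_j^\ell-U_j^\ell\|_a^2+\lambda_j\|\mathcal{P}_mU_j^\ell-U_j^\ell\|_m^2+|(a_h^\ell-a)(U_j^\ell,U_j^\ell)|+\Lambda_j|(m_h^\ell-m)(U_j^\ell,U_j^\ell)|.$$
   Context: Let $d\in\{2,3\}$ and $\Omega\subset\mathbb{R}^d$ a nonempty bounded connected open set with smooth boundary $\Gamma=\partial\Omega$; fix integers $r\ge1$, $k\ge1$; $\Omega$ is at least $C^{r+2}$ and $C^{k+1}$ regular. $H^1(\Omega,\Gamma)=\{u\in H^1(\Omega):u|_\Gamma\in H^1(\Gamma)\}$; $\nabla_\Gamma$ is the tangential gradient; $b(x)=x-\mathrm{d}(x)\nabla\mathrm{d}(x)$, $\mathrm{d}$ the signed distance to $\Gamma$, is the orthogonal projection onto $\Gamma$ near $\Gamma$. Continuous problem: $a(u,v)=\int_\Omega\nabla u\cdot\nabla v\,dx+\int_\Gamma\nabla_\Gamma u\cdot\nabla_\Gamma v\,ds+\int_\Gamma uv\,ds$, $m(u,v)=\int_\Omega uv\,dx$, $\|u\|_a=a(u,u)^{1/2}$, $\|u\|_m=m(u,u)^{1/2}$; eigenpairs $(\lambda_n,u_n)$, $a(u_n,v)=\lambda_nm(u_n,v)$ for all $v\in H^1(\Omega,\Gamma)$, eigenvalues increasing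 with multiplicity. Fix $\lambda_i$ of multiplicity $N$, $J=\{i,\dots,i+N-1\}$, $\lambda_j=\lambda_i$ for $j\in J$, $E_{\lambda_i}$ its eigenspace; $\mathcal{P}_m$ is the $m$-orthogonal projection onto $E_{\lambda_i}$. Meshes and lift: $\mathcal{T}_h^{(1)}$ quasi-uniform simplicial meshes of size $h$ with boundary vertices on $\Gamma$, $T=F_T(\hat T)$ with $F_T$ affine. For $T$ with at least two vertices on $\Gamma$ (barycentric coordinates $\lambda_l$, vertices $\hat v_l$ of $\hat T$, $\varepsilon_l=1$ iff $F_T(\hat v_l)\in\Gamma$, $\lambda^*=\sum\varepsilon_l\lambda_l$, $\hat\sigma=\{\lambda^*=0\}$, $\hat y=\frac1{\lambda^*}\sum\varepsilon_l\lambda_l\hat v_l$): $F_T^{(e)}=F_T$ on $\hat\sigma$, $F_T^{(e)}(\hat x)=F_T(\hat x)+(\lambda^* )^{r+2}(b(F_T(\hat y))-F_T(\hat y))$ otherwise; else $F_T^{(e)}=F_T$. $F_T^{(r)}$ is the $\mathbb{P}^r$-Lagrange interpolant of $F_T^{(e)}$, $T^{(r)}=F_T^{(r)}(\hat T)$, $\Omega_h=\bigcup T^{(r)}$, $\Gamma_h=\partial\Omega_h$. $G_h:\Omega_h\to\Omega$ equals $F^{(e)}_{T^{(r)}}\circ(F_T^{(r)})^{-1}$ on $T^{(r)}$ (formula of $F_T^{(e)}$ with $F_T$ replaced by $F_T^{(r)}$); continuous, elementwise $C^1$-diffeomorphism, $G_h|_{\Gamma_h}=b$. Lift: $v^\ell\circ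 G_h=v$. Discrete: $\mathbb{V}_h=\{\chi\in C^0(\Omega_h):\chi|_{T^{(r)}}\circ F_T^{(r)}\in\mathbb{P}^k(\hat T)\}$, $\mathbb{V}_h^\ell$ its lifts; $a_h(U,V)=\int_{\Omega_h}\nabla U\cdot\nabla V+\int_{\Gamma_h}\nabla_{\Gamma_h}U\cdot\nabla_{\Gamma_h}V+\int_{\Gamma_h}UV$, $m_h(U,V)=\int_{\Omega_h}UV$; for $v,w\in H^1(\Omega,\Gamma)$, $a_h^\ell(v,w)=a_h(v\circ G_h,w\circ G_h)$, $m_h^\ell(v,w)=m_h(v\circ G_h,w\circ G_h)$. Discrete eigenpairs $(\Lambda_p,U_p)$: $a_h(U_p,V)=\Lambda_pm_h(U_p,V)$ for all $V\in\mathbb{V}_h$, eigenvalues increasing. $\mathbb{F}_h^\ell=\mathrm{span}\{U_j^\ell:j\in J\}$. *)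

theory Defs
  imports "HOL-Analysis.Analysis"
begin

text \<open>Abstract (Hilbert-space level) rendering of the eigenvalue setting.
  Elements of H^1(Omega,Gamma) live in a real vector space of type 'v,
  elements of the discrete space V_h (functions on Omega_h) in a real vector
  space of type 'w.\<close>

definition sym_bilinear_on :: "'a::real_vector set \<Rightarrow> ('a \<Rightarrow> 'a \<Rightarrow> real) \<Rightarrow> bool" where
  "sym_bilinear_on S b \<longleftrightarrow>
     (\<forall>x\<in>S. \<forall>y\<in>S. \<forall>z\<in>S. b (x + y) z = b x z + b y z) \<and>
     (\<forall>x\<in>S. \<forall>z\<in>S. \<forall>c. b (c *\<^sub>R x) z = c * b x z) \<and>
     (\<forall>x\<in>S. \<forall>y\<in>S. b x y = b y x)"

definition pos_def_on :: "'a::real_vector set \<Rightarrow> ('a \<Rightarrow> 'a \<Rightarrow> real) \<Rightarrow> bool" where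
  "pos_def_on S b \<longleftrightarrow> (\<forall>x\<in>S. x \<noteq> 0 \<longrightarrow> b x x > 0)"

definition bnorm :: "('a \<Rightarrow> 'a \<Rightarrow> real) \<Rightarrow> 'a \<Rightarrow> real" where
  "bnorm b u = sqrt (b u u)"

definition eigenspace_of :: "'a set \<Rightarrow> ('a \<Rightarrow> 'a \<Rightarrow> real) \<Rightarrow> ('a \<Rightarrow> 'a \<Rightarrow> real) \<Rightarrow> real \<Rightarrow> 'a set" where
  "eigenspace_of V a m mu = {v \<in> V. \<forall>w\<in>V. a v w = mu * m v w}"

definition m_proj :: "('a::real_vector \<Rightarrow> 'a \<Rightarrow> real) \<Rightarrow> 'a set \<Rightarrow> 'a \<Rightarrow> 'a" where
  "m_proj m E x = (THE p. p \<in> E \<and> (\<forall>e\<in>E. m (x - p) e = 0))"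

end

theory Submission
  imports Defs
begin

lemma bil_facts:
  assumes V: "subspace V" and b: "sym_bilinear_on V b"
  shows bil_add1: "\<And>x y z. x\<in>V \<Longrightarrow> y\<in>V \<Longrightarrow> z\<in>V \<Longrightarrow> b (x + y) z = b x z + b y z"
    and bil_scale1: "\<And>x z c. x\<in>V \<Longrightarrow> z\<in>V \<Longrightarrow> b (c *\<^sub>R x) z = c * b x z"
    and bil_sym: "\<And>x y. x\<in>V \<Longrightarrow> y\<in>V \<Longrightarrow> b x y = b y x"
  using b unfolding sym_bilinear_on_def by auto

lemma bil_zero1:
  assumes V: "subspace V" and b: "sym_bilinear_on V b" and z: "z \<in> V"
  shows "b 0 z = 0"
proof -
  have "0 \<in> V" using V by (simp add: subspace_0)
  then have "b ((0::real) *\<^sub>R 0) z = 0 * b 0 z" using bil_scale1[OF V b] z by blast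
  then show ?thesis by simp
qed

lemma bil_diff1:
  assumes V: "subspace V" and b: "sym_bilinear_on V b" and x: "x\<in>V" and y: "y\<in>V" and z: "z\<in>V"
  shows "b (x - y) z = b x z - b y z"
proof -
  have ny: "(-1) *\<^sub>R y \<in> V" using V y by (simp add: subspace_neg)
  have "b (x - y) z = b (x + (-1) *\<^sub>R y) z" by simp
  also have "\<dots> = b x z + b ((-1) *\<^sub>R y) z" using bil_add1[OF V b x ny z] .
  also have "\<dots> = b x z - b y z" using bil_scale1[OF V b y z, of "-1"] by simp
  finally show ?thesis .
qed

lemma bil_expand:
  assumes V: "subspace V" and b: "sym_bilinear_on V b" and x: "x\<in>V" and y: "y\<in>V"
  shows "b (x - y) (x - y) = b x x - 2 * b x y + b y y"
proof -
  have d: "x - y \<in> V" using V x y by (simp add: subspace_diff)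
  have "b (x - y) (x - y) = b x (x - y) - b y (x - y)" using bil_diff1[OF V b x y d] .
  also have "b x (x - y) = b x x - b x y"
    using bil_sym[OF V b x d] bil_diff1[OF V b x y x] bil_sym[OF V b x y] by simp
  also have "b y (x - y) = b y x - b y y"
  proof -
    have "b y (x - y) = b (x - y) y" by (rule bil_sym[OF V b y d])
    also have "\<dots> = b x y - b y y" by (rule bil_diff1[OF V b x y y])
    finally show ?thesis using bil_sym[OF V b x y] by simp
  qed
  finally show ?thesis using bil_sym[OF V b x y] by simp
qed

lemma bil_sum1:
  assumes V: "subspace V" and b: "sym_bilinear_on V b" and F: "finite F"
    and f: "\<And>n. n \<in> F \<Longrightarrow> f n \<in> V" and z: "z \<in> V"
  shows "b (\<Sum>n\<in>F. c n *\<^sub>R f n) z = (\<Sum>n\<in>F. c n * b (f n) z)"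
  using F f
proof (induction F rule: finite_induct)
  case empty
  then show ?case using bil_zero1[OF V b z] by simp
next
  case (insert k F)
  have fk: "f k \<in> V" using insert by simp
  have s: "(\<Sum>n\<in>F. c n *\<^sub>R f n) \<in> V"
    using insert V by (intro subspace_sum) (auto intro: subspace_scale)
  have sk: "c k *\<^sub>R f k \<in> V" using fk V by (simp add: subspace_scale)
  have "b (\<Sum>n\<in>insert k F. c n *\<^sub>R f n) z = b (c k *\<^sub>R f k + (\<Sum>n\<in>F. c n *\<^sub>R f n)) z"
    using insert by simp
  also have "\<dots> = b (c k *\<^sub>R f k) z + b (\<Sum>n\<in>F. c n *\<^sub>R f n) z"
    using bil_add1[OF V b sk s z] .
  also have "\<dots> = c k * b (f k) z + (\<Sum>n\<in>F. c n * b (f n) z)"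
    using bil_scale1[OF V b fk z] insert by simp
  finally show ?case using insert by simp
qed

lemma eig_subspace:
  assumes V: "subspace V" and a: "sym_bilinear_on V a" and m: "sym_bilinear_on V m"
  shows "subspace (eigenspace_of V a m mu)"
  unfolding subspace_def eigenspace_of_def
proof (intro conjI ballI allI)
  show "0 \<in> {v \<in> V. \<forall>w\<in>V. a v w = mu * m v w}"
    using V bil_zero1[OF V a] bil_zero1[OF V m] by (simp add: subspace_0)
next
  fix x y assume x: "x \<in> {v \<in> V. \<forall>w\<in>V. a v w = mu * m v w}" and y: "y \<in> {v \<in> V. \<forall>w\<in>V. a v w = mu * m v w}"
  then show "x + y \<in> {v \<in> V. \<forall>w\<in>V. a v w = mu * m v w}"
    using V bil_add1[OF V a] bil_add1[OF V m] by (auto simp: subspace_add algebra_simps)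
next
  fix c x assume x: "x \<in> {v \<in> V. \<forall>w\<in>V. a v w = mu * m v w}"
  then show "c *\<^sub>R x \<in> {v \<in> V. \<forall>w\<in>V. a v w = mu * m v w}"
    using V bil_scale1[OF V a] bil_scale1[OF V m] by (auto simp: subspace_scale algebra_simps)
qed


theorem mainTheorem6:
  fixes V :: "'v::real_vector set"
    and a m :: "'v \<Rightarrow> 'v \<Rightarrow> real"
    and lam :: "nat \<Rightarrow> real" and u :: "nat \<Rightarrow> 'v"
    and Wh Vh :: "'w::real_vector set"
    and ah mh :: "'w \<Rightarrow> 'w \<Rightarrow> real"
    and Lam :: "nat \<Rightarrow> real" and Ud :: "nat \<Rightarrow> 'w" and M :: nat
    and T :: "'v \<Rightarrow> 'w" and L :: "'w \<Rightarrow> 'v"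
    and i N j :: nat and U :: 'w
  assumes V_sub: "subspace V"
    and a_bil: "sym_bilinear_on V a" and m_bil: "sym_bilinear_on V m"
    and a_pos: "pos_def_on V a" and m_pos: "pos_def_on V m"
    and cont_eig: "\<And>n. u n \<in> V \<and> (\<forall>w\<in>V. a (u n) w = lam n * m (u n) w)"
    and cont_orth: "\<And>n k. m (u n) (u k) = (if n = k then 1 else 0)"
    and cont_complete: "\<And>mu. eigenspace_of V a m mu \<subseteq> span (u ` {n. lam n = mu})"
    and lam_mono: "mono lam"
    and N_pos: "N \<ge> 1"
    and multiplicity: "{n. lam n = lam i} = {i..<i + N}"
    and j_in_J: "j \<in> {i..<i + N}"
    and Wh_sub: "subspace Wh" and Vh_sub: "subspace Vh" and Vh_Wh: "Vh \<subseteq> Wh"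
    and ah_bil: "sym_bilinear_on Wh ah" and mh_bil: "sym_bilinear_on Wh mh"
    and ah_pos: "pos_def_on Wh ah" and mh_pos: "pos_def_on Wh mh"
    and dimVh: "dim Vh = M"
    and disc_eig: "\<And>p. p < M \<Longrightarrow> Ud p \<in> Vh \<and> (\<forall>W\<in>Vh. ah (Ud p) W = Lam p * mh (Ud p) W)"
    and disc_orth: "\<And>p q. p < M \<Longrightarrow> q < M \<Longrightarrow> mh (Ud p) (Ud q) = (if p = q then 1 else 0)"
    and disc_span: "span (Ud ` {..<M}) = Vh"
    and Lam_mono: "mono_on {..<M} Lam"
    and T_maps: "T ` V \<subseteq> Wh"
    and T_lin: "\<And>x y c. x \<in> V \<Longrightarrow> y \<in> V \<Longrightarrow> T (x + y) = T x + T y \<and> T (c *\<^sub>R x) = c *\<^sub>R T x"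
    and L_maps: "L ` Vh \<subseteq> V"
    and L_lin: "\<And>x y c. x \<in> Vh \<Longrightarrow> y \<in> Vh \<Longrightarrow> L (x + y) = L x + L y \<and> L (c *\<^sub>R x) = c *\<^sub>R L x"
    and lift: "\<And>W. W \<in> Vh \<Longrightarrow> T (L W) = W"
    and j_disc: "j < M"
    and U_in: "U \<in> Vh" and U_eig: "\<forall>W\<in>Vh. ah U W = Lam j * mh U W"
    and U_norm: "bnorm m (L U) = 1"
  shows "\<bar>lam j - Lam j\<bar>
      \<le> (bnorm a (m_proj m (eigenspace_of V a m (lam i)) (L U) - L U))\<^sup>2
       + lam j * (bnorm m (m_proj m (eigenspace_of V a m (lam i)) (L U) - L U))\<^sup>2
       + \<bar>ah (T (L U)) (T (L U)) - a (L U) (L U)\<bar>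
       + Lam j * \<bar>mh (T (L U)) (T (L U)) - m (L U) (L U)\<bar>"
proof -
  define w where "w = L U"
  define mu where "mu = lam i"
  define E where "E = eigenspace_of V a m mu"
  define J where "J = {i..<i + N}"
  have w: "w \<in> V" using L_maps U_in w_def by auto
  have uJ: "\<And>n. n \<in> J \<Longrightarrow> lam n = mu"
  proof -
    fix n assume "n \<in> J"
    then have "n \<in> {n. lam n = lam i}" unfolding J_def by (simp only: multiplicity)
    then show "lam n = mu" unfolding mu_def by simp
  qed
  have lamj: "lam j = mu" using uJ j_in_J J_def by blast
  have Esub: "subspace E" unfolding E_def by (rule eig_subspace[OF V_sub a_bil m_bil])
  have EV: "E \<subseteq> V" unfolding E_def eigenspace_of_def by auto
  have uE: "u ` J \<subseteq> E" using cont_eig uJ unfolding E_def eigenspace_of_def by auto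
  have Espan: "E = span (u ` J)"
  proof
    show "E \<subseteq> span (u ` J)" using cont_complete[of mu] multiplicity
      unfolding E_def J_def mu_def by simp
    show "span (u ` J) \<subseteq> E" by (rule span_minimal[OF uE Esub])
  qed
  have uV: "\<And>n. u n \<in> V" using cont_eig by blast
  define p where "p = (\<Sum>n\<in>J. m w (u n) *\<^sub>R u n)"
  have pE: "p \<in> E" unfolding p_def Espan
    by (intro span_sum span_scale span_base) auto
  have pV: "p \<in> V" using pE EV by auto
  have wp: "w - p \<in> V" using w pV V_sub by (simp add: subspace_diff)
  have orth_gen: "m (w - p) (u k) = 0" if k: "k \<in> J" for k
  proof -
    have "m p (u k) = (\<Sum>n\<in>J. m w (u n) * m (u n) (u k))"
      unfolding p_def by (rule bil_sum1[OF V_sub m_bil]) (auto simp: J_def uV)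
    also have "\<dots> = (\<Sum>n\<in>J. if n = k then m w (u k) else 0)"
      by (rule sum.cong) (auto simp: cont_orth)
    also have "\<dots> = m w (u k)" using k by (simp add: J_def)
    finally show ?thesis using bil_diff1[OF V_sub m_bil w pV uV] by simp
  qed
  have orth: "\<forall>e\<in>E. m (w - p) e = 0"
  proof -
    have "span (u ` J) \<subseteq> {e \<in> V. m (w - p) e = 0}"
    proof (rule span_minimal)
      show "u ` J \<subseteq> {e \<in> V. m (w - p) e = 0}" using orth_gen uV by auto
      show "subspace {e \<in> V. m (w - p) e = 0}"
        unfolding subspace_def
      proof (intro conjI ballI allI)
        show "0 \<in> {e \<in> V. m (w - p) e = 0}"
          using V_sub bil_zero1[OF V_sub m_bil wp] bil_sym[OF V_sub m_bil wp]
          by (simp add: subspace_0)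
      next
        fix x y assume x: "x \<in> {e \<in> V. m (w - p) e = 0}" and y: "y \<in> {e \<in> V. m (w - p) e = 0}"
        have xV: "x \<in> V" and yV: "y \<in> V" using x y by auto
        have xy: "x + y \<in> V" using xV yV V_sub by (simp add: subspace_add)
        have "m (w - p) (x + y) = m (x + y) (w - p)" by (rule bil_sym[OF V_sub m_bil wp xy])
        also have "\<dots> = m x (w - p) + m y (w - p)" by (rule bil_add1[OF V_sub m_bil xV yV wp])
        also have "\<dots> = m (w - p) x + m (w - p) y"
          using bil_sym[OF V_sub m_bil wp xV] bil_sym[OF V_sub m_bil wp yV] by simp
        finally show "x + y \<in> {e \<in> V. m (w - p) e = 0}" using x y xy by simp
      next
        fix c x assume x: "x \<in> {e \<in> V. m (w - p) e = 0}"
        have xV: "x \<in> V" using x by auto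
        have cx: "c *\<^sub>R x \<in> V" using xV V_sub by (simp add: subspace_scale)
        have "m (w - p) (c *\<^sub>R x) = m (c *\<^sub>R x) (w - p)" by (rule bil_sym[OF V_sub m_bil wp cx])
        also have "\<dots> = c * m x (w - p)" by (rule bil_scale1[OF V_sub m_bil xV wp])
        also have "\<dots> = c * m (w - p) x" using bil_sym[OF V_sub m_bil wp xV] by simp
        finally show "c *\<^sub>R x \<in> {e \<in> V. m (w - p) e = 0}" using x cx by simp
      qed
    qed
    then show ?thesis using Espan by auto
  qed
  have uniq: "q = p" if q: "q \<in> E \<and> (\<forall>e\<in>E. m (w - q) e = 0)" for q
  proof -
    have qV: "q \<in> V" using q EV by auto
    have d: "q - p \<in> E" using q pE Esub by (simp add: subspace_diff)
    have dV: "q - p \<in> V" using d EV by auto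
    have "m (w - p) (q - p) = 0" using orth d by auto
    moreover have "m (w - q) (q - p) = 0" using q d by auto
    ultimately have "m ((w - p) - (w - q)) (q - p) = 0"
      using bil_diff1[OF V_sub m_bil wp _ dV, of "w - q"] w qV V_sub by (simp add: subspace_diff)
    then have "m (q - p) (q - p) = 0" by (simp add: algebra_simps)
    then have "q - p = 0" using m_pos dV unfolding pos_def_on_def by (metis less_irrefl)
    then show ?thesis by simp
  qed
  have Pw: "m_proj m E w = p"
    unfolding m_proj_def
  proof (rule the_equality)
    show "p \<in> E \<and> (\<forall>e\<in>E. m (w - p) e = 0)" using pE orth by blast
    show "\<And>q. q \<in> E \<and> (\<forall>e\<in>E. m (w - q) e = 0) \<Longrightarrow> q = p" by (rule uniq)
  qed
  define x where "x = p - w"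
  have xV: "x \<in> V" using pV w V_sub x_def by (simp add: subspace_diff)
  have pE': "\<forall>z\<in>V. a p z = mu * m p z" using pE unfolding E_def eigenspace_of_def by blast
  have apw: "a p w = mu * m p w" using pE' w by blast
  have app: "a p p = mu * m p p" using pE' pV by blast
  have ident: "a x x - mu * m x x = a w w - mu * m w w"
  proof -
    have e1: "m x x = m p p - 2 * m p w + m w w" unfolding x_def by (rule bil_expand[OF V_sub m_bil pV w])
    have e2: "a x x = a p p - 2 * a p w + a w w" unfolding x_def by (rule bil_expand[OF V_sub a_bil pV w])
    have e3: "mu * m x x = mu * m p p - 2 * (mu * m p w) + mu * m w w" by (simp add: e1 algebra_simps)
    show ?thesis using e2 e3 apw app by linarith
  qed
  have axx: "a x x \<ge> 0" using a_pos xV bil_zero1[OF V_sub a_bil] V_sub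
    unfolding pos_def_on_def by (cases "x = 0") (auto simp: subspace_0 less_imp_le)
  have mxx: "m x x \<ge> 0" using m_pos xV bil_zero1[OF V_sub m_bil] V_sub
    unfolding pos_def_on_def by (cases "x = 0") (auto simp: subspace_0 less_imp_le)
  have A: "(bnorm a x)\<^sup>2 = a x x" using axx by (simp add: bnorm_def)
  have B: "(bnorm m x)\<^sup>2 = m x x" using mxx by (simp add: bnorm_def)
  have mww: "m w w = 1" using U_norm w_def unfolding bnorm_def by simp
  have mu_nn: "mu \<ge> 0"
  proof -
    have "a (u j) (u j) = lam j * m (u j) (u j)" using cont_eig by blast
    then have "a (u j) (u j) = mu" using cont_orth lamj by simp
    moreover have "u j \<noteq> 0" using cont_orth[of j j] bil_zero1[OF V_sub m_bil] V_sub
      by (auto simp: subspace_0)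
    ultimately show ?thesis using a_pos uV unfolding pos_def_on_def by fastforce
  qed
  have TU: "T w = U" using lift U_in w_def by simp
  have Unz: "U \<noteq> 0"
  proof
    assume "U = 0"
    then have "L U = (0::real) *\<^sub>R L U" using L_lin[OF U_in U_in, of 0] by simp
    then have "w = 0" using w_def by simp
    then show False using mww bil_zero1[OF V_sub m_bil] V_sub by (simp add: subspace_0)
  qed
  have UW: "U \<in> Wh" using U_in Vh_Wh by auto
  have ahU: "ah U U > 0" and mhU: "mh U U > 0"
    using ah_pos mh_pos UW Unz unfolding pos_def_on_def by auto
  have ahUe: "ah U U = Lam j * mh U U" using U_eig U_in by blast
  have Lam_pos: "Lam j > 0" using ahU mhU ahUe by (metis zero_less_mult_pos2)
  have absL: "Lam j * \<bar>mh U U - 1\<bar> = \<bar>Lam j * mh U U - Lam j\<bar>"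
  proof -
    have "Lam j * mh U U - Lam j = Lam j * (mh U U - 1)" by (simp add: algebra_simps)
    then have "\<bar>Lam j * mh U U - Lam j\<bar> = \<bar>Lam j\<bar> * \<bar>mh U U - 1\<bar>" by (simp add: abs_mult)
    then show ?thesis using Lam_pos by simp
  qed
  have mu_B: "mu * m x x \<ge> 0" using mu_nn mxx by simp
  show ?thesis
    unfolding Pw x_def[symmetric] A B TU w_def[symmetric] mww lamj absL E_def[symmetric] mu_def[symmetric]
    using ident mww ahUe axx mu_B
      abs_ge_self[of "ah U U - a w w"] abs_ge_minus_self[of "ah U U - a w w"]
      abs_ge_self[of "Lam j * mh U U - Lam j"] abs_ge_minus_self[of "Lam j * mh U U - Lam j"]
    unfolding abs_le_iff by simp
qed

end
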